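(* Let $F$ be a positively expansive cellular automaton on $A^{\mathbb Z}$ and $\mu$ a $\sigma$-ergodic, $F$-invariant Borel probability measure. Then there exists a real $s>0$ such that $M_\mu((s,s))=1$.
   Context: $A$ is a finite alphabet, $\sigma(x)_i=x_{i+1}$, and $d(x,y)=2^{-\min\{|j|: x_j\ne y_j\}}$. $F$ is a cellular automaton of radius $r$, i.e. $F(x)_i=f(x_{i-r},\dots,x_{i+r})$. $B_n(x)=\{y: d(F^ix,F^iy)<2^{-n}\ \forall i\ge0\}$. $F$ is positively expansive if there is $n$ with $B_n(x)=\{x\}$ for all $x$. For $p\ge0$: ${}^{\{n\}}\alpha_p^F(x)=\{y:F^i(y)_j=F^i(x)_j\ \forall0\le i\le n,\ |j|\le p\}$. For a speed given by $g^\pm_n:A^{\mathbb Z}\to\mathbb N$, set $|G_n(x)|=g^+_n(x)+g^-_n(x)+1$ and $J_n(x)=\{j:-g^+_n(x)-p\le j\le g^-_n(x)+p\}$. For $y\in A^{\mathbb Z}$, ${}^{G_n(x)}\alpha_p^\sigma(y)=\{z:z_j=y_j\ \forall j\in J_n(x)\}$. For $0<\delta<1$, $\eta_{n,\delta}$ is the infimum of $\varepsilon>0$ such that some measurable $S$ with $\mu(S)\ge1-\delta$ satisfies $$\Big|\frac{-\log\mu({}^{G_i(x)}\alpha_p^\sigma(x))}{|G_i(x)|}-h_\mu(\sigma)\Big|<\varepsilon\quad\text{for all } x\in S,\ i\ge n.$$ $X^G_{n,\delta,p}$ is the set of $x$ for which this quantity, taken with $i=n$, is $\le\eta_{n,\delta}$.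 $\langle T^G_{n,p}(x)\rangle=\{z|_{J_n(x)}:z\in{}^{\{n\}}\alpha_p^F(x)\}$, and $T^G_{n,p}(x)$ is the union of the cylinders $\{z:z|_{J_n(x)}=w\}$ over these $w$. $T^G_{n,\delta,p}(x)=T^G_{n,p}(x)\cap X^G_{n,\delta,p}$ and $\langle T^G_{n,\delta,p}(x)\rangle=\{z|_{J_n(x)}:z\in T^G_{n,\delta,p}(x)\}$. $$M_{n,p,\delta}(G)=\int\Big(1-\frac{\log\#\langle T^G_{n,\delta,p}(x)\rangle}{-\log\mu({}^{G_n(x)}\alpha_p^\sigma(x))}\Big)d\mu(x),\qquad M_\mu(G)=\sup_p\limsup_{\delta\to0}\limsup_{n\to\infty}M_{n,p,\delta}(G).$$ $M_\mu((s,s))$ denotes $M_\mu(G)$ for $g^+_n=g^-_n=\lceil sn\rceil$. *)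

theory Defs
  imports "HOL-Probability.Probability"
begin

type_synonym 'a config = "int \<Rightarrow> 'a"

definition shift :: "'a config \<Rightarrow> 'a config" where
  "shift x = (\<lambda>i. x (i + 1))"

definition cellular_automaton :: "('a config \<Rightarrow> 'a config) \<Rightarrow> bool" where
  "cellular_automaton F \<longleftrightarrow>
     (\<exists>(r::nat) (f::'a list \<Rightarrow> 'a). \<forall>x i. F x i = f (map (\<lambda>k. x (i + k)) [- int r..int r]))"

definition cdist :: "'a config \<Rightarrow> 'a config \<Rightarrow> real" where
  "cdist x y = (if x = y then 0
      else 2 powr (- real (LEAST k::nat. \<exists>j. nat \<bar>j\<bar> = k \<and> x j \<noteq> y j)))"

definition dyn_ball :: "('a config \<Rightarrow> 'a config) \<Rightarrow> nat \<Rightarrow> 'a config \<Rightarrow> 'a config set" where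
  "dyn_ball F n x = {y. \<forall>i. cdist ((F ^^ i) x) ((F ^^ i) y) < 2 powr (- real n)}"

definition pos_expansive :: "('a config \<Rightarrow> 'a config) \<Rightarrow> bool" where
  "pos_expansive F \<longleftrightarrow> (\<exists>n. \<forall>x. dyn_ball F n x = {x})"

text \<open>Borel probability measures on A^Z (finite alphabet: Borel = product sigma algebra).\<close>
definition config_prob :: "'a config measure \<Rightarrow> bool" where
  "config_prob \<mu> \<longleftrightarrow> prob_space \<mu> \<and>
     sets \<mu> = sets (Pi\<^sub>M (UNIV::int set) (\<lambda>_. count_space (UNIV::'a set)))"

definition invariant_measure :: "'a config measure \<Rightarrow> ('a config \<Rightarrow> 'a config) \<Rightarrow> bool" where
  "invariant_measure \<mu> T \<longleftrightarrow>
     (\<forall>A\<in>sets \<mu>. T -` A \<inter> space \<mu> \<in> sets \<mu> \<and> emeasure \<mu> (T -` A \<inter> space \<mu>) = emeasure \<mu> A)"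

definition ergodic_measure :: "'a config measure \<Rightarrow> ('a config \<Rightarrow> 'a config) \<Rightarrow> bool" where
  "ergodic_measure \<mu> T \<longleftrightarrow> invariant_measure \<mu> T \<and>
     (\<forall>A\<in>sets \<mu>. T -` A \<inter> space \<mu> = A \<longrightarrow> measure \<mu> A = 0 \<or> measure \<mu> A = 1)"

text \<open>Kolmogorov-Sinai entropy (natural logarithm), finite measurable partitions given
  as measurable maps with finite range.\<close>
definition part_entropy :: "'b measure \<Rightarrow> ('b \<Rightarrow> 'c) \<Rightarrow> real" where
  "part_entropy \<mu> \<xi> =
     - (\<Sum>c\<in>\<xi> ` space \<mu>. measure \<mu> (\<xi> -` {c} \<inter> space \<mu>) * ln (measure \<mu> (\<xi> -` {c} \<inter> space \<mu>)))"

definition fin_partition :: "'b measure \<Rightarrow> ('b \<Rightarrow> nat) \<Rightarrow> bool" where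
  "fin_partition \<mu> \<xi> \<longleftrightarrow> \<xi> \<in> measurable \<mu> (count_space UNIV) \<and> finite (\<xi> ` space \<mu>)"

definition entropy_wrt :: "'b measure \<Rightarrow> ('b \<Rightarrow> 'b) \<Rightarrow> ('b \<Rightarrow> nat) \<Rightarrow> real" where
  "entropy_wrt \<mu> T \<xi> =
     lim (\<lambda>n. part_entropy \<mu> (\<lambda>x. map (\<lambda>i. \<xi> ((T ^^ i) x)) [0..<Suc n]) / real (Suc n))"

definition ks_entropy :: "'b measure \<Rightarrow> ('b \<Rightarrow> 'b) \<Rightarrow> real" where
  "ks_entropy \<mu> T = Sup {entropy_wrt \<mu> T \<xi> | \<xi>. fin_partition \<mu> \<xi>}"

type_synonym 'a speed = "(nat \<Rightarrow> 'a config \<Rightarrow> nat) \<times> (nat \<Rightarrow> 'a config \<Rightarrow> nat)"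

definition Gsize :: "'a speed \<Rightarrow> nat \<Rightarrow> 'a config \<Rightarrow> nat" where
  "Gsize G n x = fst G n x + snd G n x + 1"

definition Jset :: "'a speed \<Rightarrow> nat \<Rightarrow> nat \<Rightarrow> 'a config \<Rightarrow> int set" where
  "Jset G n p x = {j. - int (fst G n x) - int p \<le> j \<and> j \<le> int (snd G n x) + int p}"

definition F_alpha :: "('a config \<Rightarrow> 'a config) \<Rightarrow> nat \<Rightarrow> nat \<Rightarrow> 'a config \<Rightarrow> 'a config set" where
  "F_alpha F n p x = {y. \<forall>i\<le>n. \<forall>j. \<bar>j\<bar> \<le> int p \<longrightarrow> (F ^^ i) y j = (F ^^ i) x j}"

definition G_alpha :: "'a speed \<Rightarrow> nat \<Rightarrow> nat \<Rightarrow> 'a config \<Rightarrow> 'a config \<Rightarrow> 'a config set" where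
  "G_alpha G n p x y = {z. \<forall>j\<in>Jset G n p x. z j = y j}"

definition info_rate :: "'a config measure \<Rightarrow> 'a speed \<Rightarrow> nat \<Rightarrow> nat \<Rightarrow> 'a config \<Rightarrow> real" where
  "info_rate \<mu> G n p x = - ln (measure \<mu> (G_alpha G n p x x)) / real (Gsize G n x)"

definition eta :: "'a config measure \<Rightarrow> 'a speed \<Rightarrow> nat \<Rightarrow> real \<Rightarrow> nat \<Rightarrow> real" where
  "eta \<mu> G n \<delta> p = Inf {\<epsilon>. \<epsilon> > 0 \<and> (\<exists>S\<in>sets \<mu>. measure \<mu> S \<ge> 1 - \<delta> \<and>
       (\<forall>x\<in>S. \<forall>i\<ge>n. \<bar>info_rate \<mu> G i p x - ks_entropy \<mu> shift\<bar> < \<epsilon>))}"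

definition XG :: "'a config measure \<Rightarrow> 'a speed \<Rightarrow> nat \<Rightarrow> real \<Rightarrow> nat \<Rightarrow> 'a config set" where
  "XG \<mu> G n \<delta> p = {x. \<bar>info_rate \<mu> G n p x - ks_entropy \<mu> shift\<bar> \<le> eta \<mu> G n \<delta> p}"

definition TG :: "('a config \<Rightarrow> 'a config) \<Rightarrow> 'a speed \<Rightarrow> nat \<Rightarrow> nat \<Rightarrow> 'a config \<Rightarrow> 'a config set" where
  "TG F G n p x = {z. \<exists>w\<in>F_alpha F n p x. \<forall>j\<in>Jset G n p x. z j = w j}"

definition TG_delta_words ::
  "'a config measure \<Rightarrow> ('a config \<Rightarrow> 'a config) \<Rightarrow> 'a speed \<Rightarrow> nat \<Rightarrow> real \<Rightarrow> nat \<Rightarrow> 'a config \<Rightarrow> (int \<Rightarrow> 'a) set" where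
  "TG_delta_words \<mu> F G n \<delta> p x =
     (\<lambda>z. restrict z (Jset G n p x)) ` (TG F G n p x \<inter> XG \<mu> G n \<delta> p)"

definition M_npd :: "'a config measure \<Rightarrow> ('a config \<Rightarrow> 'a config) \<Rightarrow> 'a speed \<Rightarrow> nat \<Rightarrow> nat \<Rightarrow> real \<Rightarrow> real" where
  "M_npd \<mu> F G n p \<delta> = (\<integral>x. (1 - ln (real (card (TG_delta_words \<mu> F G n \<delta> p x)))
                                 / (- ln (measure \<mu> (G_alpha G n p x x)))) \<partial>\<mu>)"

definition M_mu :: "'a config measure \<Rightarrow> ('a config \<Rightarrow> 'a config) \<Rightarrow> 'a speed \<Rightarrow> ereal" where
  "M_mu \<mu> F G = (SUP p. Limsup (at_right 0)
                   (\<lambda>\<delta>. limsup (\<lambda>n. ereal (M_npd \<mu> F G n p \<delta>))))"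

definition sym_speed :: "real \<Rightarrow> 'a speed" where
  "sym_speed s = ((\<lambda>n x. nat \<lceil>s * real n\<rceil>), (\<lambda>n x. nat \<lceil>s * real n\<rceil>))"

end

theory Submission
  imports Defs
begin


lemma konig:
  fixes P :: "nat \<Rightarrow> (int \<Rightarrow> 'b::finite) set"
  assumes dec: "\<And>T T'. T \<le> T' \<Longrightarrow> P T' \<subseteq> P T"
    and ne: "\<And>T. P T \<noteq> {}"
    and fin: "\<And>T. \<exists>k::nat. \<forall>z w. (\<forall>j. \<bar>j\<bar> < int k \<longrightarrow> z j = w j) \<longrightarrow> z \<in> P T \<longrightarrow> w \<in> P T"
  shows "\<exists>z. \<forall>T. z \<in> P T"
proof -
  define good where "good u k \<longleftrightarrow> (\<forall>T. \<exists>z\<in>P T. \<forall>j. \<bar>j\<bar> < int k \<longrightarrow> z j = u j)" for u and k :: nat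
  have step: "\<exists>v. (\<forall>j. \<bar>j\<bar> < int k \<longrightarrow> v j = u j) \<and> good v (Suc k)" if g: "good u k" for u k
  proof (rule ccontr)
    assume H: "\<not> ?thesis"
    define V where "V ab = u(int k := fst ab, - int k := snd ab)" for ab :: "'b \<times> 'b"
    have "\<forall>ab. \<exists>T. \<forall>z\<in>P T. \<not> (\<forall>j. \<bar>j\<bar> < int (Suc k) \<longrightarrow> z j = V ab j)"
    proof
      fix ab
      have "\<forall>j. \<bar>j\<bar> < int k \<longrightarrow> V ab j = u j" by (auto simp: V_def)
      with H have "\<not> good (V ab) (Suc k)" by blast
      then show "\<exists>T. \<forall>z\<in>P T. \<not> (\<forall>j. \<bar>j\<bar> < int (Suc k) \<longrightarrow> z j = V ab j)"
        unfolding good_def by blast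
    qed
    then have "\<exists>Tf. \<forall>ab. \<forall>z\<in>P (Tf ab). \<not> (\<forall>j. \<bar>j\<bar> < int (Suc k) \<longrightarrow> z j = V ab j)"
      by (rule choice)
    then obtain Tf where Tf: "\<And>ab. \<forall>z\<in>P (Tf ab). \<not> (\<forall>j. \<bar>j\<bar> < int (Suc k) \<longrightarrow> z j = V ab j)"
      by blast
    define T0 where "T0 = Max (range Tf)"
    obtain z where z: "z \<in> P T0" "\<forall>j. \<bar>j\<bar> < int k \<longrightarrow> z j = u j" using g unfolding good_def by blast
    define ab where "ab = (z (int k), z (- int k))"
    have "Tf ab \<le> T0" unfolding T0_def by (rule Max_ge) auto
    then have "z \<in> P (Tf ab)" using dec z(1) by blast
    moreover have "\<forall>j. \<bar>j\<bar> < int (Suc k) \<longrightarrow> z j = V ab j"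
    proof (intro allI impI)
      fix j :: int assume "\<bar>j\<bar> < int (Suc k)"
      then have "\<bar>j\<bar> < int k \<or> j = int k \<or> j = - int k" by auto
      then show "z j = V ab j" using z(2) by (auto simp: V_def ab_def)
    qed
    ultimately show False using Tf by blast
  qed
  define U where "U = rec_nat undefined (\<lambda>k uk. SOME v. (\<forall>j. \<bar>j\<bar> < int k \<longrightarrow> v j = uk j) \<and> good v (Suc k))"
  have U0: "U 0 = undefined" and US: "U (Suc k) = (SOME v. (\<forall>j. \<bar>j\<bar> < int k \<longrightarrow> v j = U k j) \<and> good v (Suc k))" for k
    by (simp_all add: U_def)
  have QS: "(\<forall>j. \<bar>j\<bar> < int k \<longrightarrow> U (Suc k) j = U k j) \<and> good (U (Suc k)) (Suc k)"
    if g: "good (U k) k" for k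
  proof -
    have "\<exists>v. (\<forall>j. \<bar>j\<bar> < int k \<longrightarrow> v j = U k j) \<and> good v (Suc k)" by (rule step[OF g])
    then have "(\<lambda>v. (\<forall>j. \<bar>j\<bar> < int k \<longrightarrow> v j = U k j) \<and> good v (Suc k))
       (SOME v. (\<forall>j. \<bar>j\<bar> < int k \<longrightarrow> v j = U k j) \<and> good v (Suc k))" by (rule someI_ex)
    then show ?thesis unfolding US[of k] by simp
  qed
  have goodU0: "good (U k) k" for k
  proof (induction k)
    case 0 show ?case unfolding good_def using ne by auto
  next
    case (Suc k) then show ?case using QS by blast
  qed
  have goodU: "good (U k) k \<and> (\<forall>j. \<bar>j\<bar> < int k \<longrightarrow> U (Suc k) j = U k j)" for k
    using goodU0 QS by blast
  have agreeU: "\<forall>j. \<bar>j\<bar> < int k \<longrightarrow> U m j = U k j" if "k \<le> m" for k m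
    using that
  proof (induction m rule: dec_induct)
    case base then show ?case by simp
  next
    case (step m)
    then show ?case using goodU[of m] by auto
  qed
  define z where "z j = U (Suc (nat \<bar>j\<bar>)) j" for j
  have zU: "z j = U k j" if "\<bar>j\<bar> < int k" for j k
  proof -
    define m where "m = max k (Suc (nat \<bar>j\<bar>))"
    have "U m j = U k j" using agreeU[of k m] that by (simp add: m_def)
    moreover have "U m j = U (Suc (nat \<bar>j\<bar>)) j" using agreeU[of "Suc (nat \<bar>j\<bar>)" m] by (simp add: m_def)
    ultimately show ?thesis by (simp add: z_def)
  qed
  have "z \<in> P T" for T
  proof -
    obtain k where k: "\<forall>z w. (\<forall>j. \<bar>j\<bar> < int k \<longrightarrow> z j = w j) \<longrightarrow> z \<in> P T \<longrightarrow> w \<in> P T"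
      using fin by blast
    obtain w where w: "w \<in> P T" "\<forall>j. \<bar>j\<bar> < int k \<longrightarrow> w j = U k j"
      using goodU[of k] unfolding good_def by blast
    have "\<forall>j. \<bar>j\<bar> < int k \<longrightarrow> w j = z j" using w(2) zU by auto
    then show ?thesis using k w(1) by blast
  qed
  then show ?thesis by blast
qed



definition agr :: "(int \<Rightarrow> 'a) \<Rightarrow> (int \<Rightarrow> 'a) \<Rightarrow> int \<Rightarrow> int \<Rightarrow> bool" where
  "agr x y a b \<longleftrightarrow> (\<forall>j. a \<le> j \<and> j \<le> b \<longrightarrow> x j = y j)"

definition tsh :: "int \<Rightarrow> (int \<Rightarrow> 'a) \<Rightarrow> (int \<Rightarrow> 'a)" where
  "tsh t x = (\<lambda>i. x (i + t))"

lemma loc: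
  fixes F :: "(int \<Rightarrow> 'a) \<Rightarrow> (int \<Rightarrow> 'a)"
  assumes F: "\<forall>x i. F x i = f (map (\<lambda>k. x (i + k)) [- int r..int r])"
  shows "agr x y (a - int (i*r)) (b + int (i*r)) \<Longrightarrow> agr ((F^^i) x) ((F^^i) y) a b"
proof (induction i arbitrary: a b)
  case 0 then show ?case by simp
next
  case (Suc i)
  have e: "F z j = f (map (\<lambda>k. z (j + k)) [- int r..int r])" for z j using F by blast
  have IH: "agr ((F^^i) x) ((F^^i) y) (a - int r) (b + int r)"
    using Suc.prems by (intro Suc.IH) (auto simp: agr_def algebra_simps)
  show ?case unfolding agr_def
  proof (intro allI impI)
    fix j assume j: "a \<le> j \<and> j \<le> b"
    have "map (\<lambda>k. (F^^i) x (j + k)) [- int r..int r] = map (\<lambda>k. (F^^i) y (j + k)) [- int r..int r]"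
    proof (rule map_cong[OF refl])
      fix k assume "k \<in> set [- int r..int r]"
      then have "a - int r \<le> j + k \<and> j + k \<le> b + int r" using j by auto
      then show "(F^^i) x (j + k) = (F^^i) y (j + k)" using IH unfolding agr_def by blast
    qed
    moreover have "(F ^^ Suc i) x j = f (map (\<lambda>k. (F^^i) x (j + k)) [- int r..int r])"
      using e by simp
    moreover have "(F ^^ Suc i) y j = f (map (\<lambda>k. (F^^i) y (j + k)) [- int r..int r])"
      using e by simp
    ultimately show "(F ^^ Suc i) x j = (F ^^ Suc i) y j" by metis
  qed
qed

lemma trans_F:
  fixes F :: "(int \<Rightarrow> 'a) \<Rightarrow> (int \<Rightarrow> 'a)"
  assumes F: "\<forall>x i. F x i = f (map (\<lambda>k. x (i + k)) [- int r..int r])"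
  shows "(F^^i) (tsh t x) = tsh t ((F^^i) x)"
proof (induction i)
  case 0 then show ?case by simp
next
  case (Suc i)
  have e: "F z j = f (map (\<lambda>k. z (j + k)) [- int r..int r])" for z j using F by blast
  have c: "F (tsh t y) = tsh t (F y)" for y
  proof
    fix j
    show "F (tsh t y) j = tsh t (F y) j"
    proof -
      have "F (tsh t y) j = f (map (\<lambda>k. tsh t y (j + k)) [- int r..int r])" by (rule e)
      also have "\<dots> = f (map (\<lambda>k. y (j + t + k)) [- int r..int r])"
        unfolding tsh_def by (simp add: ac_simps)
      also have "\<dots> = F y (j + t)" by (rule e[symmetric])
      finally show ?thesis unfolding tsh_def by simp
    qed
  qed
  have "(F ^^ Suc i) (tsh t x) = F ((F ^^ i) (tsh t x))" by simp
  also have "\<dots> = tsh t (F ((F ^^ i) x))" using c Suc by simp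
  finally show ?case by simp
qed

lemma agr_trans: "agr (tsh c u) (tsh c v) a b \<longleftrightarrow> agr u v (a + c) (b + c)"
proof
  assume H: "agr (tsh c u) (tsh c v) a b"
  show "agr u v (a + c) (b + c)" unfolding agr_def
  proof (intro allI impI)
    fix j assume "a + c \<le> j \<and> j \<le> b + c"
    then have "a \<le> j - c \<and> j - c \<le> b" by simp
    then have "tsh c u (j - c) = tsh c v (j - c)" using H unfolding agr_def by blast
    then show "u j = v j" unfolding tsh_def by simp
  qed
next
  assume H: "agr u v (a + c) (b + c)"
  show "agr (tsh c u) (tsh c v) a b" using H unfolding agr_def tsh_def by simp
qed

lemma cdist_lt:
  assumes "agr u v (- int n) (int n)"
  shows "cdist u v < 2 powr (- real n)"
proof (cases "u = v")
  case True then show ?thesis by (simp add: cdist_def)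
next
  case False
  then obtain j where j: "u j \<noteq> v j" by auto
  define L where "L = (LEAST k::nat. \<exists>j. nat \<bar>j\<bar> = k \<and> u j \<noteq> v j)"
  have "\<exists>j. nat \<bar>j\<bar> = L \<and> u j \<noteq> v j"
    unfolding L_def by (rule LeastI_ex) (use j in blast)
  then obtain j' where j': "nat \<bar>j'\<bar> = L" "u j' \<noteq> v j'" by blast
  have "\<not> \<bar>j'\<bar> \<le> int n"
  proof
    assume "\<bar>j'\<bar> \<le> int n"
    then have "- int n \<le> j' \<and> j' \<le> int n" by linarith
    then show False using assms j'(2) unfolding agr_def by blast
  qed
  then have "L > n" using j'(1) by auto
  then have "2 powr (- real L) < 2 powr (- real n)" by (intro powr_less_mono) auto
  then show ?thesis using False by (simp add: cdist_def L_def)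
qed

lemma expans:
  fixes F :: "(int \<Rightarrow> 'a) \<Rightarrow> (int \<Rightarrow> 'a)"
  assumes "\<forall>x. dyn_ball F N0 x = {x}"
    and "\<forall>i. agr ((F^^i) x) ((F^^i) y) (- int N0) (int N0)"
  shows "y = x"
proof -
  have "y \<in> dyn_ball F N0 x" unfolding dyn_ball_def using assms(2) cdist_lt by blast
  then show ?thesis using assms(1) by auto
qed



lemma agr_tr: "agr x y a b \<Longrightarrow> agr y z a b \<Longrightarrow> agr x z a b"
  unfolding agr_def by metis
lemma agr_sym: "agr x y a b \<Longrightarrow> agr y x a b"
  unfolding agr_def by metis
lemma agr_mono: "agr x y a b \<Longrightarrow> a \<le> a' \<Longrightarrow> b' \<le> b \<Longrightarrow> agr x y a' b'"
  unfolding agr_def by auto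

lemma compact_step:
  fixes F :: "('a::finite) config \<Rightarrow> 'a config"
  assumes F: "\<forall>x i. F x i = f (map (\<lambda>k. x (i + k)) [- int r..int r])"
    and N0: "\<forall>x. dyn_ball F N0 x = {x}"
  shows "\<exists>T. \<forall>x y. (\<forall>i\<le>T. agr ((F^^i) x) ((F^^i) y) (- int N0) (int N0))
             \<longrightarrow> agr x y (- int N0 - 1) (int N0 + 1)"
proof (rule ccontr)
  assume H: "\<not> ?thesis"
  define P where "P T = {z :: int \<Rightarrow> 'a \<times> 'a.
     (\<forall>i\<le>T. agr ((F^^i) (fst \<circ> z)) ((F^^i) (snd \<circ> z)) (- int N0) (int N0)) \<and>
     \<not> agr (fst \<circ> z) (snd \<circ> z) (- int N0 - 1) (int N0 + 1)}" for T
  have dec: "P T' \<subseteq> P T" if "T \<le> T'" for T T' using that by (auto simp: P_def)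
  have ne: "P T \<noteq> {}" for T
  proof -
    from H obtain x y where xy: "\<forall>i\<le>T. agr ((F^^i) x) ((F^^i) y) (- int N0) (int N0)"
      "\<not> agr x y (- int N0 - 1) (int N0 + 1)" by blast
    have "fst \<circ> (\<lambda>j. (x j, y j)) = x" "snd \<circ> (\<lambda>j. (x j, y j)) = y" by (auto simp: comp_def)
    then have "(\<lambda>j. (x j, y j)) \<in> P T" using xy by (simp add: P_def)
    then show ?thesis by blast
  qed
  have fin: "\<exists>k::nat. \<forall>z w. (\<forall>j. \<bar>j\<bar> < int k \<longrightarrow> z j = w j) \<longrightarrow> z \<in> P T \<longrightarrow> w \<in> P T" for T
  proof (intro exI allI impI)
    fix z w :: "int \<Rightarrow> 'a \<times> 'a"
    assume zw: "\<forall>j. \<bar>j\<bar> < int (N0 + T*r + 2) \<longrightarrow> z j = w j" and z: "z \<in> P T"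
    have A: "agr (fst \<circ> z) (fst \<circ> w) (- int N0 - int (i*r)) (int N0 + int (i*r)) \<and>
             agr (snd \<circ> z) (snd \<circ> w) (- int N0 - int (i*r)) (int N0 + int (i*r))" if "i \<le> T" for i
    proof -
      have "i * r \<le> T * r" using that by (rule mult_le_mono1)
      then have ir: "int (i * r) \<le> int (T * r)" by linarith
      have "\<forall>j. - int N0 - int (i*r) \<le> j \<and> j \<le> int N0 + int (i*r) \<longrightarrow> z j = w j"
      proof (intro allI impI)
        fix j assume "- int N0 - int (i*r) \<le> j \<and> j \<le> int N0 + int (i*r)"
        then have "\<bar>j\<bar> < int (N0 + T*r + 2)" using ir unfolding abs_less_iff by linarith
        then show "z j = w j" using zw by blast
      qed
      then show ?thesis unfolding agr_def by simp
    qed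
    have A0: "agr (fst \<circ> z) (fst \<circ> w) (- int N0 - 1) (int N0 + 1) \<and>
             agr (snd \<circ> z) (snd \<circ> w) (- int N0 - 1) (int N0 + 1)"
    proof -
      have "\<forall>j. - int N0 - 1 \<le> j \<and> j \<le> int N0 + 1 \<longrightarrow> z j = w j"
      proof (intro allI impI)
        fix j assume "- int N0 - 1 \<le> j \<and> j \<le> int N0 + 1"
        then have "\<bar>j\<bar> < int (N0 + T*r + 2)" unfolding abs_less_iff by linarith
        then show "z j = w j" using zw by blast
      qed
      then show ?thesis unfolding agr_def by simp
    qed
    have "agr ((F^^i) (fst \<circ> w)) ((F^^i) (snd \<circ> w)) (- int N0) (int N0)" if "i \<le> T" for i
    proof -
      have 1: "agr ((F^^i) (fst \<circ> z)) ((F^^i) (fst \<circ> w)) (- int N0) (int N0)"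
        using loc[OF F] A[OF that] by blast
      have 2: "agr ((F^^i) (snd \<circ> z)) ((F^^i) (snd \<circ> w)) (- int N0) (int N0)"
        using loc[OF F] A[OF that] by blast
      have 3: "agr ((F^^i) (fst \<circ> z)) ((F^^i) (snd \<circ> z)) (- int N0) (int N0)"
        using z that by (simp add: P_def)
      show ?thesis using agr_tr[OF agr_tr[OF agr_sym[OF 1] 3] 2] .
    qed
    moreover have "\<not> agr (fst \<circ> w) (snd \<circ> w) (- int N0 - 1) (int N0 + 1)"
    proof
      assume "agr (fst \<circ> w) (snd \<circ> w) (- int N0 - 1) (int N0 + 1)"
      then have "agr (fst \<circ> z) (snd \<circ> z) (- int N0 - 1) (int N0 + 1)"
        using A0 agr_tr agr_sym by metis
      then show False using z by (simp add: P_def)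
    qed
    ultimately show "w \<in> P T" by (simp add: P_def)
  qed
  obtain z where z: "\<forall>T. z \<in> P T" using konig[of P, OF dec ne fin] by blast
  have "\<forall>i. agr ((F^^i) (fst \<circ> z)) ((F^^i) (snd \<circ> z)) (- int N0) (int N0)"
  proof
    fix i show "agr ((F^^i) (fst \<circ> z)) ((F^^i) (snd \<circ> z)) (- int N0) (int N0)"
      using z[rule_format, of i] by (simp add: P_def)
  qed
  then have "snd \<circ> z = fst \<circ> z" using expans[OF N0] by blast
  then have "agr (fst \<circ> z) (snd \<circ> z) (- int N0 - 1) (int N0 + 1)" by (simp add: agr_def)
  then show False using z[rule_format, of 0] by (simp add: P_def)
qed



theorem proposition1:
  fixes F :: "('a::finite) config \<Rightarrow> 'a config" and \<mu> :: "'a config measure"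
  assumes "cellular_automaton F" and "pos_expansive F"
    and "config_prob \<mu>" and "ergodic_measure \<mu> shift" and "invariant_measure \<mu> F"
  shows "\<exists>s::real. s > 0 \<and> M_mu \<mu> F (sym_speed s) = 1"
proof -
  obtain r f where F: "\<forall>x i. F x i = f (map (\<lambda>k. x (i + k)) [- int r..int r])"
    using assms(1) unfolding cellular_automaton_def by blast
  obtain N0 where N0: "\<forall>x. dyn_ball F N0 x = {x}" using assms(2) unfolding pos_expansive_def by blast
  obtain T where T: "\<forall>x y. (\<forall>i\<le>T. agr ((F^^i) x) ((F^^i) y) (- int N0) (int N0))
             \<longrightarrow> agr x y (- int N0 - 1) (int N0 + 1)"
    using compact_step[OF F N0] by blast
  define T1 where "T1 = Suc T"
  have G: "agr x y (c - int N0 - 1) (c + int N0 + 1)"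
    if h: "\<forall>i\<le>T1. agr ((F^^i) x) ((F^^i) y) (c - int N0) (c + int N0)" for x y c
  proof -
    have "\<forall>i\<le>T. agr ((F^^i) (tsh c x)) ((F^^i) (tsh c y)) (- int N0) (int N0)"
    proof (intro allI impI)
      fix i assume "i \<le> T"
      then have "agr ((F^^i) x) ((F^^i) y) (c - int N0) (c + int N0)" using h by (auto simp: T1_def)
      then show "agr ((F^^i) (tsh c x)) ((F^^i) (tsh c y)) (- int N0) (int N0)"
        by (simp add: trans_F[OF F] agr_trans algebra_simps)
    qed
    then have "agr (tsh c x) (tsh c y) (- int N0 - 1) (int N0 + 1)" using T by blast
    then have "agr x y (- int N0 - 1 + c) (int N0 + 1 + c)" by (simp add: agr_trans)
    then show ?thesis by (simp add: algebra_simps)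
  qed
  have G2: "agr x y (- m - 1) (m + 1)"
    if m: "int N0 \<le> m" and h: "\<forall>i\<le>T1. agr ((F^^i) x) ((F^^i) y) (- m) m" for x y and m :: int
  proof -
    have h1: "agr x y (m - int N0 - int N0 - 1) (m - int N0 + int N0 + 1)"
    proof (rule G)
      show "\<forall>i\<le>T1. agr ((F^^i) x) ((F^^i) y) (m - int N0 - int N0) (m - int N0 + int N0)"
        using h m by (auto intro: agr_mono)
    qed
    have h2: "agr x y (int N0 - m - int N0 - 1) (int N0 - m + int N0 + 1)"
    proof (rule G)
      show "\<forall>i\<le>T1. agr ((F^^i) x) ((F^^i) y) (int N0 - m - int N0) (int N0 - m + int N0)"
        using h m by (auto intro: agr_mono)
    qed
    have h0: "agr x y (- m) m" using h[rule_format, of 0] by simp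
    show ?thesis unfolding agr_def
    proof (intro allI impI)
      fix j assume j: "- m - 1 \<le> j \<and> j \<le> m + 1"
      then consider "j = m + 1" | "j = - m - 1" | "- m \<le> j \<and> j \<le> m" by linarith
      then show "x j = y j"
      proof cases
        case 1 then show ?thesis using h1 m unfolding agr_def by auto
      next
        case 2 then show ?thesis using h2 m unfolding agr_def by auto
      next
        case 3 then show ?thesis using h0 unfolding agr_def by auto
      qed
    qed
  qed
  have G3: "\<forall>x y t. (\<forall>i \<le> t + k*T1. agr ((F^^i) x) ((F^^i) y) (- int N0) (int N0))
     \<longrightarrow> (\<forall>i\<le>t. agr ((F^^i) x) ((F^^i) y) (- int N0 - int k) (int N0 + int k))" for k
  proof (induction k)
    case 0 show ?case by simp
  next
    case (Suc k)
    show ?case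
    proof (intro allI impI)
      fix x y t i
      assume h: "\<forall>i \<le> t + Suc k * T1. agr ((F^^i) x) ((F^^i) y) (- int N0) (int N0)" and i: "i \<le> t"
      have "\<forall>i \<le> (t + T1) + k*T1. agr ((F^^i) x) ((F^^i) y) (- int N0) (int N0)"
        using h by (simp add: algebra_simps)
      then have IH': "\<forall>i\<le>t+T1. agr ((F^^i) x) ((F^^i) y) (- int N0 - int k) (int N0 + int k)"
        using Suc.IH by blast
      have "\<forall>i'\<le>T1. agr ((F^^i') ((F^^i) x)) ((F^^i') ((F^^i) y)) (- (int N0 + int k)) (int N0 + int k)"
      proof (intro allI impI)
        fix i' assume "i' \<le> T1"
        then have "i' + i \<le> t + T1" using i by simp
        then have "agr ((F^^(i'+i)) x) ((F^^(i'+i)) y) (- int N0 - int k) (int N0 + int k)"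
          using IH' by blast
        then show "agr ((F^^i') ((F^^i) x)) ((F^^i') ((F^^i) y)) (- (int N0 + int k)) (int N0 + int k)"
          by (simp add: funpow_add)
      qed
      then have "agr ((F^^i) x) ((F^^i) y) (- (int N0 + int k) - 1) (int N0 + int k + 1)"
        by (intro G2) auto
      then show "agr ((F^^i) x) ((F^^i) y) (- int N0 - int (Suc k)) (int N0 + int (Suc k))"
        by (simp add: algebra_simps)
    qed
  qed
  define s where "s = 1 / (2 * real T1)"
  have spos: "s > 0" by (simp add: s_def T1_def)
  define G where "G = (sym_speed s :: 'a speed)"
  have key: "card (TG_delta_words \<mu> F G n \<delta> N0 x) \<le> 1" if n: "2 * T1 \<le> n" for n \<delta> x
  proof -
    define k where "k = n div T1"
    have T1pos: "T1 > 0" by (simp add: T1_def)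
    have kT: "k * T1 \<le> n" by (simp add: k_def)
    have "2 * T1 div T1 \<le> k" unfolding k_def using n by (rule div_le_mono)
    then have k1: "k \<ge> 2" using T1pos by simp
    have ceil: "nat \<lceil>s * real n\<rceil> \<le> k"
    proof -
      have "n = k * T1 + n mod T1" by (simp add: k_def)
      moreover have "n mod T1 < T1" using T1pos by simp
      ultimately have "n < (k + 1) * T1" by simp
      also have "\<dots> \<le> (2 * k) * T1" using k1 by (intro mult_le_mono1) simp
      finally have "n \<le> 2 * k * T1" by simp
      then have "real n \<le> real (2 * k * T1)" by (simp only: of_nat_le_iff)
      then have "real n \<le> 2 * real k * real T1" by simp
      then have "s * real n \<le> real k" using T1pos by (simp add: s_def field_simps)
      then have "s * real n \<le> real_of_int (int k)" by (simp only: of_int_of_nat_eq)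
      then have "\<lceil>s * real n\<rceil> \<le> int k" by (rule ceiling_le)
      then have "nat \<lceil>s * real n\<rceil> \<le> nat (int k)" by (rule nat_mono)
      then show ?thesis by (simp only: nat_int)
    qed
    have J: "Jset G n N0 x = {j. - int (nat \<lceil>s * real n\<rceil>) - int N0 \<le> j \<and> j \<le> int (nat \<lceil>s * real n\<rceil>) + int N0}"
      by (simp add: Jset_def G_def sym_speed_def)
    have agrw: "\<forall>j\<in>Jset G n N0 x. w j = x j" if w: "w \<in> F_alpha F n N0 x" for w
    proof -
      have "\<forall>i \<le> 0 + k*T1. agr ((F^^i) w) ((F^^i) x) (- int N0) (int N0)"
        using w kT unfolding F_alpha_def agr_def by (auto simp: abs_le_iff)
      then have "agr w x (- int N0 - int k) (int N0 + int k)" using G3[of k] by fastforce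
      then have ag: "\<forall>j. - int N0 - int k \<le> j \<and> j \<le> int N0 + int k \<longrightarrow> w j = x j"
        unfolding agr_def .
      have ck: "int (nat \<lceil>s * real n\<rceil>) \<le> int k" using ceil by (simp only: of_nat_le_iff)
      show ?thesis unfolding J
      proof (intro ballI)
        fix j assume "j \<in> {j. - int (nat \<lceil>s * real n\<rceil>) - int N0 \<le> j \<and> j \<le> int (nat \<lceil>s * real n\<rceil>) + int N0}"
        then have "- int (nat \<lceil>s * real n\<rceil>) - int N0 \<le> j \<and> j \<le> int (nat \<lceil>s * real n\<rceil>) + int N0"
          unfolding mem_Collect_eq .
        then have "- int N0 - int k \<le> j \<and> j \<le> int N0 + int k" using ck by linarith
        then show "w j = x j" using ag by blast
      qed
    qed
    have "TG_delta_words \<mu> F G n \<delta> N0 x \<subseteq> {restrict x (Jset G n N0 x)}"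
    proof
      fix u assume "u \<in> TG_delta_words \<mu> F G n \<delta> N0 x"
      then obtain z where z: "z \<in> TG F G n N0 x" and u: "u = restrict z (Jset G n N0 x)"
        unfolding TG_delta_words_def by blast
      from z obtain w where w: "w \<in> F_alpha F n N0 x" "\<forall>j\<in>Jset G n N0 x. z j = w j"
        unfolding TG_def by blast
      have "restrict z (Jset G n N0 x) = restrict x (Jset G n N0 x)"
        using w agrw[OF w(1)] by (intro restrict_ext) auto
      then show "u \<in> {restrict x (Jset G n N0 x)}" using u by simp
    qed
    then show ?thesis using card_mono[of "{restrict x (Jset G n N0 x)}"] by simp
  qed
  have prob: "prob_space \<mu>" using assms(3) by (simp add: config_prob_def)
  have fm: "finite_measure \<mu>" using prob by (simp add: prob_space_def)
  have Mone: "M_npd \<mu> F G n N0 \<delta> = 1" if n: "2 * T1 \<le> n" for n \<delta>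
  proof -
    have "(\<lambda>x. 1 - ln (real (card (TG_delta_words \<mu> F G n \<delta> N0 x))) / (- ln (measure \<mu> (G_alpha G n N0 x x)))) = (\<lambda>x. 1)"
    proof
      fix x
      have "card (TG_delta_words \<mu> F G n \<delta> N0 x) = 0 \<or> card (TG_delta_words \<mu> F G n \<delta> N0 x) = 1"
        using key[OF n, of \<delta> x] by linarith
      then show "1 - ln (real (card (TG_delta_words \<mu> F G n \<delta> N0 x))) / (- ln (measure \<mu> (G_alpha G n N0 x x))) = 1"
        by auto
    qed
    then show ?thesis unfolding M_npd_def using prob_space.prob_space[OF prob] by simp
  qed
  have Mle: "M_npd \<mu> F G n p \<delta> \<le> 1" for n p \<delta>
  proof -
    define g where "g x = 1 - ln (real (card (TG_delta_words \<mu> F G n \<delta> p x))) / (- ln (measure \<mu> (G_alpha G n p x x)))" for x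
    have g1: "g x \<le> 1" for x
    proof -
      have a: "0 \<le> ln (real (card (TG_delta_words \<mu> F G n \<delta> p x)))"
        by (cases "card (TG_delta_words \<mu> F G n \<delta> p x) = 0") auto
      have b: "0 \<le> - ln (measure \<mu> (G_alpha G n p x x))"
      proof (cases "measure \<mu> (G_alpha G n p x x) = 0")
        case True then show ?thesis by simp
      next
        case False
        have m1: "measure \<mu> (G_alpha G n p x x) \<le> 1" by (rule prob_space.prob_le_1[OF prob])
        have m0: "0 \<le> measure \<mu> (G_alpha G n p x x)" by (rule measure_nonneg)
        have "0 < measure \<mu> (G_alpha G n p x x)" "measure \<mu> (G_alpha G n p x x) \<le> 1"
          using False m0 m1 by linarith+
        then have "ln (measure \<mu> (G_alpha G n p x x)) \<le> 0" by (simp only: ln_le_zero_iff)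
        then show ?thesis by simp
      qed
      show ?thesis using divide_nonneg_nonneg[OF a b] by (simp add: g_def)
    qed
    have "integral\<^sup>L \<mu> g \<le> 1"
    proof (cases "integrable \<mu> g")
      case True
      have "integral\<^sup>L \<mu> g \<le> integral\<^sup>L \<mu> (\<lambda>x. 1)"
        by (rule integral_mono[OF True]) (use fm finite_measure.integrable_const g1 in auto)
      then show ?thesis using prob_space.prob_space[OF prob] by simp
    next
      case False then show ?thesis by (simp add: not_integrable_integral_eq)
    qed
    then show ?thesis unfolding M_npd_def g_def by simp
  qed
  have L1: "limsup (\<lambda>n. ereal (M_npd \<mu> F G n N0 \<delta>)) = 1" for \<delta>
  proof -
    have "eventually (\<lambda>n. ereal (M_npd \<mu> F G n N0 \<delta>) = 1) sequentially"
      unfolding eventually_sequentially using Mone by auto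
    then have "((\<lambda>n. ereal (M_npd \<mu> F G n N0 \<delta>)) \<longlongrightarrow> 1) sequentially" by (rule tendsto_eventually)
    then show ?thesis by (intro lim_imp_Limsup) auto
  qed
  have L2: "limsup (\<lambda>n. ereal (M_npd \<mu> F G n p \<delta>)) \<le> 1" for p \<delta>
  proof -
    have "\<forall>n. ereal (M_npd \<mu> F G n p \<delta>) \<le> 1" using Mle[of _ p \<delta>] by simp
    then show ?thesis by (intro Limsup_bounded always_eventually)
  qed
  have A1: "Limsup (at_right 0) (\<lambda>\<delta>. limsup (\<lambda>n. ereal (M_npd \<mu> F G n N0 \<delta>))) = 1"
    using L1 by (simp add: Limsup_const)
  have A2: "Limsup (at_right 0) (\<lambda>\<delta>. limsup (\<lambda>n. ereal (M_npd \<mu> F G n p \<delta>))) \<le> 1" for p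
    by (rule Limsup_bounded, rule always_eventually, rule allI, rule L2)
  have "M_mu \<mu> F G = 1"
    unfolding M_mu_def
  proof (rule antisym)
    show "(SUP p. Limsup (at_right 0) (\<lambda>\<delta>. limsup (\<lambda>n. ereal (M_npd \<mu> F G n p \<delta>)))) \<le> 1"
      by (rule SUP_least) (rule A2)
    show "1 \<le> (SUP p. Limsup (at_right 0) (\<lambda>\<delta>. limsup (\<lambda>n. ereal (M_npd \<mu> F G n p \<delta>))))"
      by (rule SUP_upper2[of N0]) (simp_all add: A1)
  qed
  then show ?thesis using spos unfolding G_def by blast
qed

end
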